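(* Let $W=\tfrac12(\Xi_+-\Xi_-)$ be the half interface width of a traveling wave with speed $\Omega\neq0$, so that $W$ satisfies the traveling-wave interface condition $$\frac{2(1-\kappa)^2}{\tau|\Omega|\delta}+\frac{1-\kappa}{\tau|\Omega|}\,2W=\exp\Big(\frac{1-\kappa}{\kappa\,\tau|\Omega|}\,2W\Big)-1 ,$$ and consider the spectral equation characterizing eigenvalues $\lambda$ with $\mathrm{Re}(\tau\lambda)>-1$, $$1-\exp\Big(-\frac{\kappa\tau\lambda+\kappa-1}{\kappa\,\tau|\Omega|}\,2W\Big)=\frac{(\kappa\tau\lambda+\kappa)(\kappa\tau\lambda+\kappa-1)(\kappa\tau\lambda+\kappa-1+2W)}{\kappa\,\tau|\Omega|}.$$ Using the interface condition together with the rescaling $$\mu=\frac{\tau\lambda}{\varepsilon},\qquad \varepsilon=\frac{\tau|\Omega|}{2W},$$ this spectral equation can be written as $$\exp(+\mu)=-\frac{\kappa}{\delta}\,\frac{2(1-\kappa)^2+(1-\kappa)\,\delta\,2W+\tau|\Omega|\delta}{(\kappa\varepsilon\mu+\kappa)(\kappa\varepsilon\mu+\kappa-1)(\kappa\varepsilon\mu+\kappa-1+2W)-\kappa\,\tau|\Omega|}.$$ Moreover, the right hand side converges for $\tau\to0$ and pointwise in $\mu$ to $-2/\delta$.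
   Context: Mean-field model $\tau\,\partial_t x(t,p)=\sigma(t)+\delta(p-\tfrac12)-H'(x(t,p))$, $p\in[0,1]$, with constraint $\int_0^1 x(t,p)\,dp=\ell(t)$, disorder strength $\delta>0$, relaxation time $\tau>0$, and trilinear $H'(x)=x+1$ for $x\le-\kappa$, $H'(x)=-\frac{1-\kappa}{\kappa}x$ for $|x|\le\kappa$, $H'(x)=x-1$ for $x\ge\kappa$, with $0<\kappa<1$. Traveling waves $x(t,p)=X(p-\Omega t)$ have interface positions $\Xi_-<\Xi_+$ (where the profile crosses $-\kappa$ and $+\kappa$) and exist when the interface condition above holds; this gives $W$ of order $\tau\ln(1/\tau)$ and hence $\varepsilon$ of order $1/\ln(1/\tau)$ as $\tau\to0$. Linearizing around the wave in the comoving frame gives the eigenvalue problem $\tau\lambda Z(P)=\tau\Omega Z'(P)-Z(P)+\kappa^{-1}\Psi(P)Z(P)-\kappa^{-1}\int\Psi(Q)Z(Q)\,dQ$ with $\Psi$ the indicator of $|P|<W$; its eigenvalues with $\mathrm{Re}(\tau\lambda)>-1$ are exactly the solutions of the spectral equation above with $\tau\lambda\neq(1-\kappa)/\kappa$. *)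

theory Defs
  imports "HOL-Analysis.Analysis"
begin

definition interface_cond :: "real \<Rightarrow> real \<Rightarrow> real \<Rightarrow> real \<Rightarrow> real \<Rightarrow> bool" where
  "interface_cond \<kappa> \<delta> \<tau> \<Omega> W \<longleftrightarrow>
     2 * (1 - \<kappa>)^2 / (\<tau> * \<bar>\<Omega>\<bar> * \<delta>) + (1 - \<kappa>) / (\<tau> * \<bar>\<Omega>\<bar>) * (2 * W)
       = exp ((1 - \<kappa>) / (\<kappa> * \<tau> * \<bar>\<Omega>\<bar>) * (2 * W)) - 1"

definition spectral_eq :: "real \<Rightarrow> real \<Rightarrow> real \<Rightarrow> real \<Rightarrow> complex \<Rightarrow> bool" where
  "spectral_eq \<kappa> \<tau> \<Omega> W lam \<longleftrightarrow>
     1 - exp (- (of_real \<kappa> * of_real \<tau> * lam + of_real \<kappa> - 1)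
                 / of_real (\<kappa> * \<tau> * \<bar>\<Omega>\<bar>) * of_real (2 * W))
     = (of_real \<kappa> * of_real \<tau> * lam + of_real \<kappa>)
       * (of_real \<kappa> * of_real \<tau> * lam + of_real \<kappa> - 1)
       * (of_real \<kappa> * of_real \<tau> * lam + of_real \<kappa> - 1 + of_real (2 * W))
       / of_real (\<kappa> * \<tau> * \<bar>\<Omega>\<bar>)"

definition eps_scale :: "real \<Rightarrow> real \<Rightarrow> real \<Rightarrow> real" where
  "eps_scale \<tau> \<Omega> W = \<tau> * \<bar>\<Omega>\<bar> / (2 * W)"

definition rescaled_rhs :: "real \<Rightarrow> real \<Rightarrow> real \<Rightarrow> real \<Rightarrow> real \<Rightarrow> complex \<Rightarrow> complex" where
  "rescaled_rhs \<kappa> \<delta> \<tau> \<Omega> W \<mu> =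
     (let \<epsilon> = of_real (eps_scale \<tau> \<Omega> W); k = of_real \<kappa> in
      - (k / of_real \<delta>)
      * of_real (2 * (1 - \<kappa>)^2 + (1 - \<kappa>) * \<delta> * (2 * W) + \<tau> * \<bar>\<Omega>\<bar> * \<delta>)
      / ((k * \<epsilon> * \<mu> + k) * (k * \<epsilon> * \<mu> + k - 1) * (k * \<epsilon> * \<mu> + k - 1 + of_real (2 * W))
         - of_real (\<kappa> * \<tau> * \<bar>\<Omega>\<bar>)))"

end

theory Submission
  imports Defs "HOL-Real_Asymp.Real_Asymp"
begin


lemma alg1:
  fixes z P :: complex and E A :: real
  assumes "z \<noteq> 0" "E > 0" "A > 0"
  shows "(1 - inverse z * of_real E = P / of_real A) \<longleftrightarrow> z = of_real A * of_real E / (of_real A - P)"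
proof (cases "of_real A - P = 0")
  case True
  then have "P = of_real A" by simp
  then show ?thesis using assms by (auto simp: field_simps)
next
  case False
  have A0: "(of_real A :: complex) \<noteq> 0" using assms by simp
  have "(1 - inverse z * of_real E = P / of_real A) \<longleftrightarrow> z * of_real A - of_real A * of_real E = z * P"
    using assms A0 by (auto simp: field_simps)
  also have "\<dots> \<longleftrightarrow> z * (of_real A - P) = of_real A * of_real E" by (auto simp: algebra_simps)
  also have "\<dots> \<longleftrightarrow> z = of_real A * of_real E / (of_real A - P)" using False by (auto simp: field_simps)
  finally show ?thesis .
qed



lemma part1:
  fixes \<kappa> \<delta> \<Omega> \<tau> W :: real and lam :: complex
  assumes k0: "0 < \<kappa>" and k1: "\<kappa> < 1" and d0: "0 < \<delta>" and O: "\<Omega> \<noteq> 0"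
    and t0: "0 < \<tau>" and W0: "0 < W" and ic: "interface_cond \<kappa> \<delta> \<tau> \<Omega> W"
  shows "spectral_eq \<kappa> \<tau> \<Omega> W lam \<longleftrightarrow>
             (let \<mu> = of_real \<tau> * lam / of_real (eps_scale \<tau> \<Omega> W)
              in exp \<mu> = rescaled_rhs \<kappa> \<delta> \<tau> \<Omega> W \<mu>)"
proof -
  define a where "a = \<tau> * \<bar>\<Omega>\<bar>"
  have a0: "a > 0" using t0 O by (simp add: a_def)
  define \<mu> where "\<mu> = of_real \<tau> * lam / of_real (eps_scale \<tau> \<Omega> W)"
  define E where "E = exp ((1 - \<kappa>) / (\<kappa> * \<tau> * \<bar>\<Omega>\<bar>) * (2 * W))"
  have E0: "E > 0" by (simp add: E_def)
  have eps: "eps_scale \<tau> \<Omega> W = a / (2 * W)" by (simp add: eps_scale_def a_def)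
  have mu: "\<mu> = of_real (2 * W / a) * of_real \<tau> * lam"
    using W0 a0 by (simp add: \<mu>_def eps field_simps)
  have kem: "of_real \<kappa> * of_real (eps_scale \<tau> \<Omega> W) * \<mu> = of_real \<kappa> * of_real \<tau> * lam"
    using W0 a0 by (simp add: mu eps field_simps)
  have arg: "- (of_real \<kappa> * of_real \<tau> * lam + of_real \<kappa> - 1) / of_real (\<kappa> * \<tau> * \<bar>\<Omega>\<bar>) * of_real (2 * W)
      = - \<mu> + of_real ((1 - \<kappa>) / (\<kappa> * \<tau> * \<bar>\<Omega>\<bar>) * (2 * W))"
  proof -
    have h: "(of_real \<bar>\<Omega>\<bar> :: complex) \<noteq> 0" "(of_real \<tau> :: complex) \<noteq> 0" "(of_real \<kappa> :: complex) \<noteq> 0"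
      using O t0 k0 by auto
    show ?thesis using h by (simp add: mu a_def field_simps)
  qed
  have expeq: "exp (- (of_real \<kappa> * of_real \<tau> * lam + of_real \<kappa> - 1) / of_real (\<kappa> * \<tau> * \<bar>\<Omega>\<bar>) * of_real (2 * W))
      = inverse (exp \<mu>) * of_real E"
    unfolding arg exp_add exp_minus exp_of_real E_def by simp
  have N: "2 * (1 - \<kappa>)^2 + (1 - \<kappa>) * \<delta> * (2 * W) + \<tau> * \<bar>\<Omega>\<bar> * \<delta> = \<delta> * a * E"
  proof -
    have e: "E = 1 + 2 * (1 - \<kappa>)^2 / (a * \<delta>) + (1 - \<kappa>) / a * (2 * W)"
      using ic unfolding interface_cond_def E_def a_def by (simp add: mult.assoc)
    have "\<delta> * a * E = \<delta> * a + \<delta> * a * (2 * (1 - \<kappa>)^2 / (a * \<delta>)) + \<delta> * a * ((1 - \<kappa>) / a * (2 * W))"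
      unfolding e by (simp add: algebra_simps)
    also have "\<dots> = \<delta> * a + 2 * (1 - \<kappa>)^2 + (1 - \<kappa>) * \<delta> * (2 * W)"
      using a0 d0 by simp
    finally show ?thesis by (simp add: a_def mult.assoc)
  qed
  define P where "P = (of_real \<kappa> * of_real \<tau> * lam + of_real \<kappa>)
       * (of_real \<kappa> * of_real \<tau> * lam + of_real \<kappa> - 1)
       * (of_real \<kappa> * of_real \<tau> * lam + of_real \<kappa> - 1 + of_real (2 * W) :: complex)"
  have rhs: "rescaled_rhs \<kappa> \<delta> \<tau> \<Omega> W \<mu> = of_real (\<kappa> * a) * of_real E / (of_real (\<kappa> * a) - P)"
  proof -
    have "rescaled_rhs \<kappa> \<delta> \<tau> \<Omega> W \<mu> = - (of_real \<kappa> / of_real \<delta>) * of_real (\<delta> * a * E) / (P - of_real (\<kappa> * a))"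
      unfolding rescaled_rhs_def Let_def kem N P_def by (simp add: a_def)
    also have "\<dots> = of_real (\<kappa> * a) * of_real E / (of_real (\<kappa> * a) - P)"
      using d0 by (simp add: field_simps) (metis minus_diff_eq minus_divide_right)
    finally show ?thesis .
  qed
  have sp: "spectral_eq \<kappa> \<tau> \<Omega> W lam \<longleftrightarrow> 1 - inverse (exp \<mu>) * of_real E = P / of_real (\<kappa> * a)"
    unfolding spectral_eq_def expeq P_def by (simp add: a_def mult.assoc)
  show ?thesis
    unfolding Let_def \<mu>_def[symmetric] rhs sp
    by (rule alg1) (use E0 a0 k0 in auto)
qed


lemma wbound:
  fixes \<kappa> \<delta> \<Omega> \<tau> W :: real
  assumes k0: "0 < \<kappa>" and k1: "\<kappa> < 1" and d0: "0 < \<delta>" and O: "\<Omega> \<noteq> 0"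
    and t0: "0 < \<tau>" and W0: "0 < W" and ic: "interface_cond \<kappa> \<delta> \<tau> \<Omega> W"
  shows "W^2 \<le> \<kappa>^2 * \<bar>\<Omega>\<bar> / \<delta> * \<tau>"
    and "\<tau> < 2 * (1 - \<kappa>)^2 / (\<bar>\<Omega>\<bar> * \<delta>) \<Longrightarrow>
         eps_scale \<tau> \<Omega> W \<le> (1 - \<kappa>) / (\<kappa> * ln (2 * (1 - \<kappa>)^2 / (\<bar>\<Omega>\<bar> * \<delta>) / \<tau>))"
proof -
  define a where "a = \<tau> * \<bar>\<Omega>\<bar>"
  have a0: "a > 0" using t0 O by (simp add: a_def)
  define x where "x = (1 - \<kappa>) / (\<kappa> * a) * (2 * W)"
  have x0: "x > 0" using k0 k1 a0 W0 by (simp add: x_def)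
  define c where "c = 2 * (1 - \<kappa>)^2 / (a * \<delta>)"
  have c0: "c > 0" using k1 a0 d0 by (simp add: c_def)
  have kx: "(1 - \<kappa>) / a * (2 * W) = \<kappa> * x" using k0 by (simp add: x_def)
  have eq: "c + \<kappa> * x = exp x - 1"
    using ic unfolding interface_cond_def c_def x_def a_def kx[unfolded a_def x_def]
    by (simp add: mult.assoc)
  have q: "1 + x + x^2/2 \<le> exp x" using x0 by (intro exp_lower_Taylor_quadratic) simp
  have "x^2 / 2 \<le> c" using eq q k1 x0
    by (smt (verit, ccfv_threshold) mult_right_less_imp_less mult_cancel_right1)
  hence xs: "x^2 \<le> 2 * c" by simp
  have Wx: "W = \<kappa> * a * x / (2 * (1 - \<kappa>))" using k0 k1 a0 by (simp add: x_def field_simps)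
  have "W^2 = \<kappa>^2 * a^2 * x^2 / (4 * (1 - \<kappa>)^2)" unfolding Wx by (simp add: power_mult_distrib power_divide power2_eq_square algebra_simps)
  also have "\<dots> \<le> \<kappa>^2 * a^2 * (2 * c) / (4 * (1 - \<kappa>)^2)"
    using xs k1 by (intro divide_right_mono mult_left_mono) auto
  also have "\<dots> = \<kappa>^2 * a / \<delta>"
  proof -
    have m: "(1 - \<kappa>)^2 > 0" using k1 by simp
    show ?thesis unfolding c_def using m a0 d0
      by (simp add: field_simps power2_eq_square[of a])
  qed
  finally show "W^2 \<le> \<kappa>^2 * \<bar>\<Omega>\<bar> / \<delta> * \<tau>" by (simp add: a_def mult_ac)
  assume tl: "\<tau> < 2 * (1 - \<kappa>)^2 / (\<bar>\<Omega>\<bar> * \<delta>)"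
  have cK: "c = 2 * (1 - \<kappa>)^2 / (\<bar>\<Omega>\<bar> * \<delta>) / \<tau>" by (simp add: c_def a_def field_simps)
  have c1: "c > 1"
  proof -
    obtain K where K: "K = 2 * (1 - \<kappa>)^2 / (\<bar>\<Omega>\<bar> * \<delta>)" by simp
    have "K / \<tau> > 1" using tl t0 unfolding K[symmetric] by (simp add: field_simps)
    thus ?thesis unfolding cK K .
  qed
  have "c \<le> exp x" using eq k0 x0 by (smt (verit) mult_pos_pos)
  hence lx: "ln c \<le> x" using c0 by (metis ln_exp ln_le_cancel_iff exp_gt_zero)
  have lc0: "ln c > 0" using c1 by simp
  have "eps_scale \<tau> \<Omega> W = (1 - \<kappa>) / (\<kappa> * x)"
    using k0 k1 a0 W0 by (simp add: eps_scale_def x_def a_def field_simps)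
  also have "\<dots> \<le> (1 - \<kappa>) / (\<kappa> * ln c)"
    using k0 k1 lx lc0 by (intro divide_left_mono mult_left_mono mult_pos_pos) auto
  finally show "eps_scale \<tau> \<Omega> W \<le> (1 - \<kappa>) / (\<kappa> * ln (2 * (1 - \<kappa>)^2 / (\<bar>\<Omega>\<bar> * \<delta>) / \<tau>))"
    unfolding cK .
qed


lemma part2:
  fixes \<kappa> \<delta> \<Omega> :: real and Wf :: "real \<Rightarrow> real" and \<mu> :: complex
  assumes k0: "0 < \<kappa>" and k1: "\<kappa> < 1" and d0: "0 < \<delta>" and O: "\<Omega> \<noteq> 0"
    and H: "\<forall>\<tau>>0. 0 < Wf \<tau> \<and> interface_cond \<kappa> \<delta> \<tau> \<Omega> (Wf \<tau>)"
  shows "((\<lambda>\<tau>. rescaled_rhs \<kappa> \<delta> \<tau> \<Omega> (Wf \<tau>) \<mu>) \<longlongrightarrow> - 2 / of_real \<delta>) (at_right 0)"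
proof -
  define K where "K = 2 * (1 - \<kappa>)^2 / (\<bar>\<Omega>\<bar> * \<delta>)"
  have K0: "K > 0" using k1 d0 O by (simp add: K_def)
  define C where "C = \<kappa>^2 * \<bar>\<Omega>\<bar> / \<delta>"
  define e where "e = (\<lambda>\<tau>. eps_scale \<tau> \<Omega> (Wf \<tau>))"
  have ev: "eventually (\<lambda>\<tau>. 0 < \<tau> \<and> \<tau> < K) (at_right 0)"
    using K0 by (simp add: eventually_at_right_field) (metis)
  have e0: "(e \<longlongrightarrow> 0) (at_right 0)"
  proof (rule tendsto_sandwich[where f = "\<lambda>_. 0" and h = "\<lambda>t. (1-\<kappa>)/(\<kappa>* ln (K/t))"])
    show "eventually (\<lambda>t. 0 \<le> e t) (at_right 0)"
      using ev by eventually_elim (use H in \<open>auto simp: e_def eps_scale_def\<close>)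
    show "eventually (\<lambda>t. e t \<le> (1-\<kappa>)/(\<kappa>* ln (K/t))) (at_right 0)"
      using ev by eventually_elim (use H wbound(2)[OF k0 k1 d0 O] in \<open>auto simp: e_def K_def\<close>)
    show "((\<lambda>_. 0::real) \<longlongrightarrow> 0) (at_right 0)" by simp
    show "((\<lambda>t. (1-\<kappa>)/(\<kappa>* ln (K/t))) \<longlongrightarrow> 0) (at_right 0)" using K0 k0 by real_asymp
  qed
  have w0: "(Wf \<longlongrightarrow> 0) (at_right 0)"
  proof (rule tendsto_sandwich[where f = "\<lambda>_. 0" and h = "\<lambda>t. sqrt (C * t)"])
    show "eventually (\<lambda>t. 0 \<le> Wf t) (at_right 0)"
      using ev by eventually_elim (use H in auto)
    show "eventually (\<lambda>t. Wf t \<le> sqrt (C * t)) (at_right 0)"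
      using ev by eventually_elim (use H wbound(1)[OF k0 k1 d0 O] in \<open>auto simp: C_def mult_ac intro!: real_le_rsqrt\<close>)
    show "((\<lambda>_. 0::real) \<longlongrightarrow> 0) (at_right 0)" by simp
    show "((\<lambda>t. sqrt (C * t)) \<longlongrightarrow> 0) (at_right 0)"
      by (rule tendsto_eq_intros refl)+ simp
  qed
  have t0: "((\<lambda>t::real. t) \<longlongrightarrow> 0) (at_right 0)" by (rule tendsto_ident_at)
  define k where "k = (of_real \<kappa> :: complex)"
  have den: "(k * 0 * \<mu> + k) * (k * 0 * \<mu> + k - 1) * (k * 0 * \<mu> + k - 1 + of_real (2 * 0)) - of_real (\<kappa> * 0 * \<bar>\<Omega>\<bar>) \<noteq> 0"
    using k0 k1 by (simp add: k_def)
  have lim: "((\<lambda>\<tau>. - (k / of_real \<delta>)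
      * of_real (2 * (1 - \<kappa>)^2 + (1 - \<kappa>) * \<delta> * (2 * Wf \<tau>) + \<tau> * \<bar>\<Omega>\<bar> * \<delta>)
      / ((k * of_real (e \<tau>) * \<mu> + k) * (k * of_real (e \<tau>) * \<mu> + k - 1) * (k * of_real (e \<tau>) * \<mu> + k - 1 + of_real (2 * Wf \<tau>))
         - of_real (\<kappa> * \<tau> * \<bar>\<Omega>\<bar>))) \<longlongrightarrow>
      - (k / of_real \<delta>)
      * of_real (2 * (1 - \<kappa>)^2 + (1 - \<kappa>) * \<delta> * (2 * 0) + 0 * \<bar>\<Omega>\<bar> * \<delta>)
      / ((k * of_real 0 * \<mu> + k) * (k * of_real 0 * \<mu> + k - 1) * (k * of_real 0 * \<mu> + k - 1 + of_real (2 * 0))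
         - of_real (\<kappa> * 0 * \<bar>\<Omega>\<bar>))) (at_right 0)"
    using den by (intro tendsto_intros e0 w0 t0) auto
  have val: "- (k / of_real \<delta>)
      * of_real (2 * (1 - \<kappa>)^2 + (1 - \<kappa>) * \<delta> * (2 * 0) + 0 * \<bar>\<Omega>\<bar> * \<delta>)
      / ((k * of_real 0 * \<mu> + k) * (k * of_real 0 * \<mu> + k - 1) * (k * of_real 0 * \<mu> + k - 1 + of_real (2 * 0))
         - of_real (\<kappa> * 0 * \<bar>\<Omega>\<bar>)) = - 2 / of_real \<delta>"
  proof -
    have h: "k \<noteq> 0" "k - 1 \<noteq> 0" "(of_real \<delta> :: complex) \<noteq> 0" using k0 k1 d0 by (auto simp: k_def)
    have n: "(of_real (2 * (1 - \<kappa>)^2 + (1 - \<kappa>) * \<delta> * (2 * 0) + 0 * \<bar>\<Omega>\<bar> * \<delta>) :: complex) = 2 * ((k - 1) * (k - 1))"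
      by (simp add: k_def power2_eq_square algebra_simps)
    have d: "(k * of_real 0 * \<mu> + k) * (k * of_real 0 * \<mu> + k - 1) * (k * of_real 0 * \<mu> + k - 1 + of_real (2 * 0))
         - of_real (\<kappa> * 0 * \<bar>\<Omega>\<bar>) = k * ((k - 1) * (k - 1))" by simp
    have nz: "(k - 1) * (k - 1) \<noteq> 0" using h by simp
    have g: "- (k / D) * (2 * m) / (k * m) = - 2 / D" if "k \<noteq> 0" "m \<noteq> 0" "D \<noteq> 0" for D m :: complex
      using that by (simp add: field_simps)
    show ?thesis unfolding n d using g h nz by blast
  qed
  show ?thesis using lim unfolding val by (simp add: rescaled_rhs_def Let_def e_def k_def)
qed

theorem lemma2p3:
  fixes \<kappa> \<delta> \<Omega> :: real
  assumes "0 < \<kappa>" and "\<kappa> < 1" and "0 < \<delta>" and "\<Omega> \<noteq> 0"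
  shows "(\<forall>\<tau> W (lam::complex). 0 < \<tau> \<longrightarrow> 0 < W \<longrightarrow> interface_cond \<kappa> \<delta> \<tau> \<Omega> W \<longrightarrow>
            (spectral_eq \<kappa> \<tau> \<Omega> W lam \<longleftrightarrow>
             (let \<mu> = of_real \<tau> * lam / of_real (eps_scale \<tau> \<Omega> W)
              in exp \<mu> = rescaled_rhs \<kappa> \<delta> \<tau> \<Omega> W \<mu>)))
       \<and> (\<forall>Wf :: real \<Rightarrow> real.
            (\<forall>\<tau>>0. 0 < Wf \<tau> \<and> interface_cond \<kappa> \<delta> \<tau> \<Omega> (Wf \<tau>)) \<longrightarrow>
            (\<forall>\<mu>::complex. ((\<lambda>\<tau>. rescaled_rhs \<kappa> \<delta> \<tau> \<Omega> (Wf \<tau>) \<mu>)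
                              \<longlongrightarrow> - 2 / of_real \<delta>) (at_right 0)))"
  using part1[OF assms] part2[OF assms] by blast

end
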